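(* Let $(\mathbf{X},\mathbf{p})$ be a $\{1,k\}$-payment equilibrium and let $z<k$ be an integer such that: agents in $N_L$ are $(2-1/k)$-EFX towards each other; $p(X_j)\in[z,k+z]$ for all $j\in N_L$; and $p(X_i)\in[k,k+z]$ for all $i\in N_H$. If some agent $i$ is not $(2-1/k)$-EFX towards another agent $j$, then $i\in N_H$, $j\in N_L$, $\alpha_i=1$, and $X_j\subseteq\mathsf{MPB}_i$.
   Context: Fix $k>1$. Agents $N$, chores $M$, additive costs $c_i(e)\in\{1,k\}$; as a standing assumption every agent $i$ has at least one item $e$ with $c_i(e)=1$. An allocation $\mathbf{X}$ partitions $M$ into bundles $X_i$. A payment vector assigns $p(e)>0$, $p(X)=\sum_{e\in X}p(e)$; $\alpha_{i,e}=c_i(e)/p(e)$, $\alpha_i=\min_{e\in M}\alpha_{i,e}$, $\mathsf{MPB}_i=\{e:\alpha_{i,e}=\alpha_i\}$; $(\mathbf{X},\mathbf{p})$ is a $\{1,k\}$-payment equilibrium if $X_i\subseteq\mathsf{MPB}_i$ for all $i$ and $p(e)\in\{1,k\}$ for all $e$. $L=\{e:p(e)=1\}$, $H=\{e:p(e)=k\}$, $N_L=\{i:X_i\subseteq L\}$, $N_H=\{i:|X_i\cap H|\ge1\}$. Agent $i$ is $\beta$-EFX towards $j$ if $X_i=\emptyset$ or $c_i(X_i\setminus\{e\})\le\beta\,c_i(X_j)$ for all $e\in X_i$. *)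

theory Defs
  imports Main "HOL-Library.Extended_Real"
begin

definition cost :: "('a \<Rightarrow> 'b \<Rightarrow> real) \<Rightarrow> 'a \<Rightarrow> 'b set \<Rightarrow> real" where
  "cost c i S = (\<Sum>e\<in>S. c i e)"

definition pay :: "('b \<Rightarrow> real) \<Rightarrow> 'b set \<Rightarrow> real" where
  "pay p S = (\<Sum>e\<in>S. p e)"

definition mpb_ratio :: "('b \<Rightarrow> real) \<Rightarrow> ('a \<Rightarrow> 'b \<Rightarrow> real) \<Rightarrow> 'b set \<Rightarrow> 'a \<Rightarrow> real" where
  "mpb_ratio p c M i = Min ((\<lambda>e. c i e / p e) ` M)"

definition MPB :: "('b \<Rightarrow> real) \<Rightarrow> ('a \<Rightarrow> 'b \<Rightarrow> real) \<Rightarrow> 'b set \<Rightarrow> 'a \<Rightarrow> 'b set" where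
  "MPB p c M i = {e \<in> M. c i e / p e = mpb_ratio p c M i}"

definition instance_ok :: "real \<Rightarrow> 'a set \<Rightarrow> 'b set \<Rightarrow> ('a \<Rightarrow> 'b \<Rightarrow> real) \<Rightarrow> bool" where
  "instance_ok k N M c \<longleftrightarrow> finite N \<and> finite M \<and> k > 1 \<and>
     (\<forall>i\<in>N. \<forall>e\<in>M. c i e \<in> {1, k}) \<and> (\<forall>i\<in>N. \<exists>e\<in>M. c i e = 1)"

definition allocation :: "'a set \<Rightarrow> 'b set \<Rightarrow> ('a \<Rightarrow> 'b set) \<Rightarrow> bool" where
  "allocation N M X \<longleftrightarrow> (\<Union>i\<in>N. X i) = M \<and>
     (\<forall>i\<in>N. \<forall>j\<in>N. i \<noteq> j \<longrightarrow> X i \<inter> X j = {})"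

definition payment_eq_1k :: "real \<Rightarrow> 'a set \<Rightarrow> 'b set \<Rightarrow> ('a \<Rightarrow> 'b \<Rightarrow> real)
    \<Rightarrow> ('a \<Rightarrow> 'b set) \<Rightarrow> ('b \<Rightarrow> real) \<Rightarrow> bool" where
  "payment_eq_1k k N M c X p \<longleftrightarrow> allocation N M X \<and>
     (\<forall>e\<in>M. p e \<in> {1, k}) \<and> (\<forall>i\<in>N. X i \<subseteq> MPB p c M i)"

definition Lset :: "'b set \<Rightarrow> ('b \<Rightarrow> real) \<Rightarrow> 'b set" where
  "Lset M p = {e \<in> M. p e = 1}"

definition Hset :: "real \<Rightarrow> 'b set \<Rightarrow> ('b \<Rightarrow> real) \<Rightarrow> 'b set" where
  "Hset k M p = {e \<in> M. p e = k}"

definition NL :: "'a set \<Rightarrow> 'b set \<Rightarrow> ('a \<Rightarrow> 'b set) \<Rightarrow> ('b \<Rightarrow> real) \<Rightarrow> 'a set" where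
  "NL N M X p = {i \<in> N. X i \<subseteq> Lset M p}"

definition NH :: "real \<Rightarrow> 'a set \<Rightarrow> 'b set \<Rightarrow> ('a \<Rightarrow> 'b set) \<Rightarrow> ('b \<Rightarrow> real) \<Rightarrow> 'a set" where
  "NH k N M X p = {i \<in> N. card (X i \<inter> Hset k M p) \<ge> 1}"

definition beta_EFX :: "real \<Rightarrow> ('a \<Rightarrow> 'b \<Rightarrow> real) \<Rightarrow> ('a \<Rightarrow> 'b set) \<Rightarrow> 'a \<Rightarrow> 'a \<Rightarrow> bool" where
  "beta_EFX \<beta> c X i j \<longleftrightarrow> X i = {} \<or>
     (\<forall>e\<in>X i. cost c i (X i - {e}) \<le> \<beta> * cost c i (X j))"

end

theory Submission
  imports Defs
begin

theorem lemma9: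
  fixes k :: real and z :: int
    and N :: "'a set" and M :: "'b set"
    and c :: "'a \<Rightarrow> 'b \<Rightarrow> real" and X :: "'a \<Rightarrow> 'b set" and p :: "'b \<Rightarrow> real"
  assumes inst: "instance_ok k N M c"
    and eq: "payment_eq_1k k N M c X p"
    and zk: "real_of_int z < k"
    and efxL: "\<forall>i\<in>NL N M X p. \<forall>j\<in>NL N M X p. i \<noteq> j \<longrightarrow> beta_EFX (2 - 1/k) c X i j"
    and payL: "\<forall>j\<in>NL N M X p. real_of_int z \<le> pay p (X j) \<and> pay p (X j) \<le> k + real_of_int z"
    and payH: "\<forall>i\<in>NH k N M X p. k \<le> pay p (X i) \<and> pay p (X i) \<le> k + real_of_int z"
    and ij: "i \<in> N" "j \<in> N" "i \<noteq> j"
    and notefx: "\<not> beta_EFX (2 - 1/k) c X i j"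
  shows "i \<in> NH k N M X p \<and> j \<in> NL N M X p \<and> mpb_ratio p c M i = 1 \<and> X j \<subseteq> MPB p c M i"
proof -
  define b where "b = 2 - 1/k"
  define a where "a = mpb_ratio p c M i"
  have finM: "finite M" and k1: "k > 1" and cvals: "\<forall>i\<in>N. \<forall>e\<in>M. c i e \<in> {1, k}"
    and cone: "\<forall>i\<in>N. \<exists>e\<in>M. c i e = 1"
    using inst unfolding instance_ok_def by auto
  have alloc: "allocation N M X" and pvals: "\<forall>e\<in>M. p e \<in> {1, k}"
    and mpbX: "\<forall>i\<in>N. X i \<subseteq> MPB p c M i"
    using eq unfolding payment_eq_1k_def by auto
  have XM: "\<And>l. l \<in> N \<Longrightarrow> X l \<subseteq> M" using alloc unfolding allocation_def by auto
  have finX: "\<And>l. l \<in> N \<Longrightarrow> finite (X l)" using XM finM finite_subset by blast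
  have ppos: "\<And>e. e \<in> M \<Longrightarrow> p e \<ge> 1" using pvals k1 by force
  have pk: "\<And>e. e \<in> M \<Longrightarrow> p e \<le> k" using pvals k1 by force
  have cpos: "\<And>e. e \<in> M \<Longrightarrow> c i e \<ge> 1" using cvals ij k1 by force
  have bk: "b * k = 2*k - 1" unfolding b_def using k1 by (simp add: field_simps)
  have b1: "b \<ge> 1" unfolding b_def using k1 by (simp add: field_simps)
  obtain e1 where e1: "e1 \<in> M" "c i e1 = 1" using cone ij by blast
  have Mne: "M \<noteq> {}" using e1 by blast
  have ale: "\<And>e. e \<in> M \<Longrightarrow> a \<le> c i e / p e"
    unfolding a_def mpb_ratio_def using finM by (intro Min_le) auto
  have ain: "a \<in> (\<lambda>e. c i e / p e) ` M"
    unfolding a_def mpb_ratio_def using finM Mne by (intro Min_in) auto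
  then obtain e0 where e0: "e0 \<in> M" "a = c i e0 / p e0" by blast
  have "a \<le> 1" using ale[OF e1(1)] e1(2) ppos[OF e1(1)]
    by (smt (verit, best) divide_le_eq_1)
  have acases: "a = 1 \<or> a = 1/k"
  proof -
    have "c i e0 \<in> {1,k}" "p e0 \<in> {1,k}" using cvals ij e0 pvals by auto
    then show ?thesis using e0 k1 \<open>a \<le> 1\<close> by auto
  qed
  have apos: "a > 0" using acases k1 by auto
  have cge: "\<And>S. S \<subseteq> M \<Longrightarrow> cost c i S \<ge> a * pay p S"
  proof -
    fix S assume S: "S \<subseteq> M"
    have "a * pay p S = (\<Sum>e\<in>S. a * p e)" unfolding pay_def by (simp add: sum_distrib_left)
    also have "\<dots> \<le> (\<Sum>e\<in>S. c i e)"
    proof (rule sum_mono)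
      fix e assume "e \<in> S"
      then have "e \<in> M" using S by auto
      then show "a * p e \<le> c i e" using ale[of e] ppos[of e] by (simp add: le_divide_eq)
    qed
    finally show "cost c i S \<ge> a * pay p S" unfolding cost_def .
  qed
  have ceq: "\<And>e. e \<in> MPB p c M i \<Longrightarrow> c i e = a * p e"
  proof -
    fix e assume "e \<in> MPB p c M i"
    then have "e \<in> M" "c i e / p e = a" unfolding MPB_def a_def by auto
    then show "c i e = a * p e" using ppos[of e] by (simp add: divide_eq_eq)
  qed
  from notefx obtain e where eX: "e \<in> X i" and viol: "cost c i (X i - {e}) > b * cost c i (X j)"
    unfolding beta_EFX_def b_def by force
  have eM: "e \<in> M" using eX XM ij by auto
  have costdiff: "cost c i (X i - {e}) = a * (pay p (X i) - p e)"
  proof -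
    have "cost c i (X i - {e}) = (\<Sum>e'\<in>X i - {e}. a * p e')"
      unfolding cost_def using mpbX ij ceq by (intro sum.cong) auto
    also have "\<dots> = a * pay p (X i - {e})" unfolding pay_def by (simp add: sum_distrib_left)
    also have "pay p (X i - {e}) = pay p (X i) - p e"
      unfolding pay_def using finX[OF ij(1)] eX by (simp add: sum_diff1)
    finally show ?thesis .
  qed
  have partition: "\<And>l. l \<in> N \<Longrightarrow> l \<in> NL N M X p \<or> l \<in> NH k N M X p"
  proof -
    fix l assume l: "l \<in> N"
    show "l \<in> NL N M X p \<or> l \<in> NH k N M X p"
    proof (cases "X l \<subseteq> Lset M p")
      case True then show ?thesis using l unfolding NL_def by auto
    next
      case False
      then obtain e' where e': "e' \<in> X l" "p e' \<noteq> 1" unfolding Lset_def using XM[OF l] by auto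
      then have "e' \<in> X l \<inter> Hset k M p" using pvals XM[OF l] unfolding Hset_def by auto
      moreover have "finite (X l \<inter> Hset k M p)" using finX[OF l] by auto
      ultimately have "card (X l \<inter> Hset k M p) \<ge> 1"
        by (metis One_nat_def Suc_leI card_gt_0_iff empty_iff)
      then show ?thesis using l unfolding NH_def by auto
    qed
  qed
  have disj: "\<And>l. l \<in> NL N M X p \<Longrightarrow> l \<notin> NH k N M X p"
  proof
    fix l assume "l \<in> NL N M X p" "l \<in> NH k N M X p"
    then have "X l \<inter> Hset k M p = {}" using k1 unfolding NL_def Lset_def Hset_def by auto
    then show False using \<open>l \<in> NH k N M X p\<close> unfolding NH_def by auto
  qed
  have key: "\<not> (j \<in> NH k N M X p)"
  proof
    assume jH: "j \<in> NH k N M X p"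
    have pj: "pay p (X j) \<ge> k" using payH jH by auto
    have pi: "pay p (X i) \<le> k + z" using partition[OF ij(1)] payH payL by auto
    have h1: "b * cost c i (X j) \<ge> b * (a * pay p (X j))"
      using cge[OF XM[OF ij(2)]] b1 by (simp add: mult_left_mono)
    have h2: "b * (a * pay p (X j)) \<ge> a * (b * k)"
      using pj apos b1 by (simp add: mult_left_mono)
    have h3: "a * (b * k) = a * (2*k - 1)" using bk by simp
    from h1 h2 h3 have "a * (pay p (X i) - p e) > a * (2*k - 1)" using viol costdiff by linarith
    then have "pay p (X i) - p e > 2*k - 1" using apos by simp
    then show False using pi ppos[OF eM] zk by linarith
  qed
  then have jL: "j \<in> NL N M X p" using partition ij by blast
  have iH: "i \<in> NH k N M X p"
  proof (rule ccontr)
    assume "i \<notin> NH k N M X p"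
    then have "i \<in> NL N M X p" using partition ij by blast
    then have "beta_EFX (2 - 1/k) c X i j" using efxL jL ij by blast
    then show False using notefx by blast
  qed
  have pi: "pay p (X i) \<le> k + z" using payH iH by auto
  have a1: "a = 1"
  proof (rule ccontr)
    assume "a \<noteq> 1"
    then have ak: "a = 1/k" using acases by auto
    have "c i e = a * p e" using ceq mpbX ij eX by auto
    then have ce: "c i e = p e / k" using ak by simp
    have "p e = 1 \<or> p e = k" using pvals eM by auto
    moreover have "c i e = 1 \<or> c i e = k" using cvals eM ij by auto
    moreover have "k * k > 1" using k1 by (metis less_1_mult)
    ultimately have "p e = k" using ce k1 by (auto simp: field_simps)
    then have cd: "cost c i (X i - {e}) = (pay p (X i) - k)/k" using costdiff ak by simp
    show False
    proof (cases "X j = {}")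
      case True
      then have "z \<le> 0" using payL jL unfolding pay_def by auto
      then have "cost c i (X i - {e}) \<le> 0" using cd pi k1 by (simp add: divide_le_0_iff)
      moreover have "cost c i (X j) = 0" using True unfolding cost_def by simp
      ultimately show False using viol by simp
    next
      case False
      then obtain e' where e': "e' \<in> X j" by blast
      have "cost c i (X j) \<ge> c i e'" unfolding cost_def
        using finX[OF ij(2)] e' cpos XM[OF ij(2)] by (intro member_le_sum) force+
      then have "cost c i (X j) \<ge> 1" using cpos[of e'] e' XM[OF ij(2)] by force
      then have "b * cost c i (X j) \<ge> 1" using b1 by (metis mult_mono' mult_1 zero_le_one)
      moreover have "cost c i (X i - {e}) < 1" using cd pi zk k1 by (simp add: divide_less_eq)
      ultimately show False using viol by linarith
    qed
  qed
  have sub: "X j \<subseteq> MPB p c M i"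
  proof
    fix e' assume e': "e' \<in> X j"
    have e'M: "e' \<in> M" using e' XM ij by auto
    have pe': "p e' = 1" using jL e' unfolding NL_def Lset_def by auto
    have "c i e' = 1"
    proof (rule ccontr)
      assume "c i e' \<noteq> 1"
      then have cik: "c i e' = k" using cvals ij e'M by auto
      have "cost c i (X j) \<ge> c i e'" unfolding cost_def
        using finX[OF ij(2)] e' cpos XM[OF ij(2)] by (intro member_le_sum) force+
      then have "b * cost c i (X j) \<ge> b * k" using b1 cik by (simp add: mult_left_mono)
      moreover have "cost c i (X i - {e}) \<le> k + z - 1" using costdiff a1 pi ppos[OF eM] by simp
      ultimately show False using viol bk zk by linarith
    qed
    then show "e' \<in> MPB p c M i" unfolding MPB_def using e'M pe' a1 a_def by simp
  qed
  show ?thesis using iH jL a1 sub a_def by simp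
qed

end
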